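(* For all probability measures $P,Q$, all $\alpha>0$ and all $\gamma\ge1$, writing $E:=E_\gamma(P\|Q)$: $$\mathscr{H}_\alpha(P\|Q)\ \ge\ \frac{1}{\alpha-1}\Bigl[\bigl(1+\tfrac{E}{\gamma}\bigr)^{1-\alpha} + \bigl(\tfrac{1-E}{\gamma}\bigr)^{1-\alpha} - 1 - \gamma^{\alpha-1}\Bigr]\quad(\alpha\ne1),$$ $$D(P\|Q)\ \ge\ -\ln\Bigl(\bigl(1+\tfrac{E}{\gamma}\bigr)(1-E)\Bigr)\quad(\text{in nats}),$$ and, for $\alpha\ne1$, $$D_\alpha(P\|Q)\ \ge\ \frac{1}{\alpha-1}\log\Bigl(\bigl(1+\tfrac{E}{\gamma}\bigr)^{1-\alpha}+\gamma^{\alpha-1}\bigl[(1-E)^{1-\alpha}-1\bigr]\Bigr),$$ while for $\alpha=1$, $D_1(P\|Q)=D(P\|Q)\ge -\log\bigl((1+\tfrac{E}{\gamma})(1-E)\bigr)$. (Expressions equal to $+\infty$ when $E=1$ and the corresponding power/logarithm diverges.)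
   Context: $\log$ is to an arbitrary fixed base, $\ln$ is the natural logarithm. For densities $p,q$ w.r.t. a dominating measure $\mu$: $E_\gamma(P\|Q):=\int(p-\gamma q)^+\,\mathrm{d}\mu$ for $\gamma\ge1$; the Hellinger divergence of order $\alpha\in(0,1)\cup(1,\infty)$ is $\mathscr{H}_\alpha(P\|Q):=D_{f_\alpha}(P\|Q)$ with $f_\alpha(t)=\frac{t^\alpha-1}{\alpha-1}$, where $D_f(P\|Q):=\int qf(p/q)\,\mathrm{d}\mu$ (standard conventions at $0$); $D(P\|Q)$ is the relative entropy $D_f$ with $f(t)=t\log t$; the Rényi divergence is $D_\alpha(P\|Q):=\frac{1}{\alpha-1}\log\bigl(1+(\alpha-1)\mathscr{H}_\alpha(P\|Q)\bigr)$ for $\alpha\neq1$, and $D_1:=D$. *)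

theory Defs
  imports "HOL-Analysis.Analysis"
begin

text \<open>Probability measures P, Q are given by densities p, q w.r.t. a dominating measure M.\<close>

definition E_gamma :: "'a measure \<Rightarrow> ('a \<Rightarrow> real) \<Rightarrow> ('a \<Rightarrow> real) \<Rightarrow> real \<Rightarrow> real" where
  "E_gamma M p q \<gamma> = integral\<^sup>L M (\<lambda>x. max 0 (p x - \<gamma> * q x))"

text \<open>Standard conventions at 0: f(0) := lim_{t->0+} f(t), 0 f(a/0) := a lim_{t->oo} f(t)/t.\<close>

definition f_zero :: "(real \<Rightarrow> real) \<Rightarrow> ereal" where
  "f_zero f = Lim (at_right 0) (\<lambda>t. ereal (f t))"

definition f_slope_inf :: "(real \<Rightarrow> real) \<Rightarrow> ereal" where
  "f_slope_inf f = Lim at_top (\<lambda>t. ereal (f t / t))"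

definition f_integrand :: "(real \<Rightarrow> real) \<Rightarrow> ('a \<Rightarrow> real) \<Rightarrow> ('a \<Rightarrow> real) \<Rightarrow> 'a \<Rightarrow> ereal" where
  "f_integrand f p q x =
     (if q x > 0 then (if p x > 0 then ereal (q x * f (p x / q x)) else ereal (q x) * f_zero f)
      else (if p x > 0 then ereal (p x) * f_slope_inf f else 0))"

definition f_div :: "(real \<Rightarrow> real) \<Rightarrow> 'a measure \<Rightarrow> ('a \<Rightarrow> real) \<Rightarrow> ('a \<Rightarrow> real) \<Rightarrow> ereal" where
  "f_div f M p q =
     enn2ereal (\<integral>\<^sup>+ x. e2ennreal (f_integrand f p q x) \<partial>M)
     - enn2ereal (\<integral>\<^sup>+ x. e2ennreal (- f_integrand f p q x) \<partial>M)"

definition hellinger :: "real \<Rightarrow> 'a measure \<Rightarrow> ('a \<Rightarrow> real) \<Rightarrow> ('a \<Rightarrow> real) \<Rightarrow> ereal" where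
  "hellinger \<alpha> = f_div (\<lambda>t. (t powr \<alpha> - 1) / (\<alpha> - 1))"

definition relent :: "real \<Rightarrow> 'a measure \<Rightarrow> ('a \<Rightarrow> real) \<Rightarrow> ('a \<Rightarrow> real) \<Rightarrow> ereal" where
  "relent b = f_div (\<lambda>t. t * log b t)"

text \<open>Renyi divergence D_alpha = 1/(alpha-1) log(1 + (alpha-1) H_alpha), with extended-real
  conventions: H = oo gives oo; log 0 = -oo, so a nonpositive argument (only possible for
  alpha < 1) gives +oo.\<close>
definition renyi :: "real \<Rightarrow> real \<Rightarrow> 'a measure \<Rightarrow> ('a \<Rightarrow> real) \<Rightarrow> ('a \<Rightarrow> real) \<Rightarrow> ereal" where
  "renyi b \<alpha> M p q =
     (if \<alpha> = 1 then relent b M p q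
      else (let H = hellinger \<alpha> M p q in
            if H = \<infinity> then \<infinity>
            else (let y = 1 + (\<alpha> - 1) * real_of_ereal H in
                  if y \<le> 0 then \<infinity> else ereal (log b y / (\<alpha> - 1)))))"

end

theory Submission
  imports Defs "HOL-Real_Asymp.Real_Asymp"
begin
lemma fdiv_lower:
  fixes g :: "'a \<Rightarrow> ereal" and l :: "'a \<Rightarrow> real"
  assumes ge: "AE x in M. ereal (l x) \<le> g x" and int: "integrable M l"
  shows "ereal (integral\<^sup>L M l) \<le> enn2ereal (\<integral>\<^sup>+ x. e2ennreal (g x) \<partial>M) - enn2ereal (\<integral>\<^sup>+ x. e2ennreal (- g x) \<partial>M)"
    and "(\<integral>\<^sup>+ x. e2ennreal (- g x) \<partial>M) < \<infinity>"
proof -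
  have lm[measurable]: "l \<in> borel_measurable M" using int by auto
  define A where "A = (\<integral>\<^sup>+ x. ennreal (l x) \<partial>M)"
  define B where "B = (\<integral>\<^sup>+ x. ennreal (- l x) \<partial>M)"
  have Afin: "A < \<infinity>" unfolding A_def using int
    using int unfolding real_integrable_def by (simp add: top.not_eq_extremum)
  have Bfin: "B < \<infinity>" unfolding B_def using int
    using int unfolding real_integrable_def by (simp add: top.not_eq_extremum)
  have I: "integral\<^sup>L M l = enn2real A - enn2real B"
    unfolding A_def B_def by (rule real_lebesgue_integral_def[OF int])
  have XA: "A \<le> (\<integral>\<^sup>+ x. e2ennreal (g x) \<partial>M)" unfolding A_def
    proof (rule nn_integral_mono_AE)
    show "AE x in M. ennreal (l x) \<le> e2ennreal (g x)"
      using ge by (rule eventually_mono) (metis e2ennreal_ereal e2ennreal_mono)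
  qed
  have YB: "(\<integral>\<^sup>+ x. e2ennreal (- g x) \<partial>M) \<le> B" unfolding B_def
  proof (rule nn_integral_mono_AE)
    show "AE x in M. e2ennreal (- g x) \<le> ennreal (- l x)"
      using ge
    proof (rule eventually_mono)
      fix x assume "ereal (l x) \<le> g x"
      then have "- g x \<le> ereal (- l x)" by (metis ereal_minus_le_minus uminus_ereal.simps(1))
      then show "e2ennreal (- g x) \<le> ennreal (- l x)" using e2ennreal_mono by fastforce
    qed
  qed
  show "(\<integral>\<^sup>+ x. e2ennreal (- g x) \<partial>M) < \<infinity>" using YB Bfin by auto
  show "ereal (integral\<^sup>L M l) \<le> enn2ereal (\<integral>\<^sup>+ x. e2ennreal (g x) \<partial>M) - enn2ereal (\<integral>\<^sup>+ x. e2ennreal (- g x) \<partial>M)"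
  proof -
    define X where "X = (\<integral>\<^sup>+ x. e2ennreal (g x) \<partial>M)"
    define Y where "Y = (\<integral>\<^sup>+ x. e2ennreal (- g x) \<partial>M)"
    have "enn2ereal A \<le> enn2ereal X" using XA X_def by (simp add: less_eq_ennreal.rep_eq)
    moreover have "enn2ereal Y \<le> enn2ereal B" using YB Y_def by (simp add: less_eq_ennreal.rep_eq)
    moreover have "enn2ereal A = ereal (enn2real A)" using Afin
      proof -
      have "enn2ereal A = enn2ereal (ennreal (enn2real A))" using Afin by simp
      then show ?thesis by simp
    qed
    moreover have "enn2ereal B = ereal (enn2real B)" using Bfin
      proof -
      have "enn2ereal B = enn2ereal (ennreal (enn2real B))" using Bfin by simp
      then show ?thesis by simp
    qed
    moreover have "enn2ereal Y \<noteq> \<infinity>" using YB Bfin by (simp add: Y_def) 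
    ultimately have "ereal (enn2real A) - ereal (enn2real B) \<le> enn2ereal X - enn2ereal Y"
      by (metis ereal_minus_mono)
    then show ?thesis unfolding I X_def Y_def by simp
  qed
qed

definition phiH :: "real \<Rightarrow> real \<Rightarrow> real" where "phiH a s = (s powr (1-a) - 1)/(a-1)"
definition dphiH :: "real \<Rightarrow> real \<Rightarrow> real" where "dphiH a s = - (s powr (-a))"

lemma tangentH:
  assumes a: "a > 0" "a \<noteq> 1" and c: "c > 0" and s: "s > 0"
  shows "phiH a c + dphiH a c * (s - c) \<le> phiH a s"
proof -
  have "dphiH a c * (s - c) \<le> phiH a s - phiH a c"
  proof (rule f''_imp_f'[of "{0<..}" "phiH a" "dphiH a" "\<lambda>x. a * x powr (-a-1)"])
    show "convex {0::real<..}" by simp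
    show "(phiH a has_real_derivative dphiH a x) (at x)" if "x \<in> {0<..}" for x
    proof -
      have "((\<lambda>s. (s powr (1-a) - 1)/(a-1)) has_real_derivative ((1-a) * x powr (1-a-1)) / (a-1)) (at x)"
        using that a by (auto intro!: derivative_eq_intros)
      moreover have "((1-a) * x powr (1-a-1)) / (a-1) = dphiH a x"
        using a by (simp add: dphiH_def field_simps)
      ultimately show ?thesis by (simp add: phiH_def[abs_def])
    qed
    show "(dphiH a has_real_derivative a * x powr (-a-1)) (at x)" if "x \<in> {0<..}" for x
    proof -
      have "((\<lambda>s. - (s powr (-a))) has_real_derivative - ((-a) * x powr (-a-1))) (at x)"
        using that by (auto intro!: derivative_eq_intros)
      then show ?thesis by (simp add: dphiH_def[abs_def])
    qed
    show "0 \<le> a * x powr (-a-1)" if "x \<in> {0<..}" for x using a by simp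
  qed (use c s in auto)
  then show ?thesis by simp
qed

lemma tangentH0:
  assumes a: "a > 0" "a < 1" and c: "c > 0"
  shows "phiH a c + dphiH a c * (0 - c) \<le> phiH a 0"
proof -
  have cc: "c * c powr (-a) = c powr (1-a)" using c
  proof -
    have "c powr (1 + -a) = c powr 1 * c powr (-a)" by (rule powr_add)
    then have "c powr (1-a) = c powr 1 * c powr (-a)" by simp
    moreover have "c powr 1 = c" using c by simp
    ultimately show ?thesis by metis
  qed
  have "c powr (1-a) \<ge> 0" by simp
  have "phiH a c + dphiH a c * (0 - c) = (c powr (1-a) - 1)/(a-1) + c powr (1-a)"
    unfolding phiH_def dphiH_def using cc by (simp add: algebra_simps)
  also have "... = (c powr (1-a) * a - 1)/(a-1)" using a by (simp add: field_simps)
  also have "... \<le> (0 - 1)/(a-1)"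
  proof (rule divide_right_mono_neg)
    show "0 - 1 \<le> c powr (1 - a) * a - 1" using a \<open>c powr (1-a) \<ge> 0\<close> by simp
  qed (use a in simp)
  also have "... = phiH a 0" using a by (simp add: phiH_def)
  finally show ?thesis .
qed

lemma key:
  fixes \<phi> d :: "real \<Rightarrow> real"
  assumes g: "g > 0" and p: "p > 0" and q: "q \<ge> 0"
    and t1: "\<phi> c1 + d c1 * (min (q/p) (1/g) - c1) \<le> \<phi> (min (q/p) (1/g))"
    and t2: "\<phi> c2 + d c2 * (max (q/p) (1/g) - c2) \<le> \<phi> (max (q/p) (1/g))"
  shows "p * (\<phi> c1 - c1 * d c1 + \<phi> c2 - c2 * d c2 - \<phi> (1/g))
           + d c1 * (p/g - max 0 (p - g*q)/g) + d c2 * (q + max 0 (p - g*q)/g) \<le> p * \<phi> (q/p)"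
proof -
  have split: "\<phi> (q/p) = \<phi> (min (q/p) (1/g)) + \<phi> (max (q/p) (1/g)) - \<phi> (1/g)"
    by (cases "q/p \<le> 1/g") (auto simp: min_def max_def)
  have mn: "p * min (q/p) (1/g) = p/g - max 0 (p - g*q)/g"
  proof (cases "q/p \<le> 1/g")
    case True
    then have "q \<le> p/g" using p g by (simp add: field_simps)
    then have "g*q \<le> p" using g by (simp add: field_simps)
    then show ?thesis using True p g by (auto simp: min_def max_def field_simps)
  next
    case False
    then have "q > p/g" using p g by (simp add: field_simps)
    then have "g*q > p" using g by (simp add: field_simps)
    then show ?thesis using False p g by (auto simp: min_def max_def field_simps)
  qed
  have mx: "p * max (q/p) (1/g) = q + max 0 (p - g*q)/g"
  proof (cases "q/p \<le> 1/g")
    case True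
    then have "q \<le> p/g" using p g by (simp add: field_simps)
    then have "g*q \<le> p" using g by (simp add: field_simps)
    then show ?thesis using True p g by (auto simp: min_def max_def field_simps)
  next
    case False
    then have "q > p/g" using p g by (simp add: field_simps)
    then have "g*q > p" using g by (simp add: field_simps)
    then show ?thesis using False p g by (auto simp: min_def max_def field_simps)
  qed
  have "p * (\<phi> c1 + d c1 * (min (q/p) (1/g) - c1)) + p * (\<phi> c2 + d c2 * (max (q/p) (1/g) - c2)) - p * \<phi> (1/g)
        \<le> p * \<phi> (q/p)"
    using mult_left_mono[OF t1, of p] mult_left_mono[OF t2, of p] p split by (simp add: algebra_simps)
  moreover have "p * (\<phi> c1 + d c1 * (min (q/p) (1/g) - c1)) + p * (\<phi> c2 + d c2 * (max (q/p) (1/g) - c2)) - p * \<phi> (1/g)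
     = p * (\<phi> c1 - c1 * d c1 + \<phi> c2 - c2 * d c2 - \<phi> (1/g)) + d c1 * (p * min (q/p) (1/g)) + d c2 * (p * max (q/p) (1/g))"
    by (simp add: algebra_simps)
  ultimately show ?thesis unfolding mn mx by simp
qed

abbreviation fH :: "real \<Rightarrow> real \<Rightarrow> real" where "fH a \<equiv> (\<lambda>t. (t powr a - 1) / (a - 1))"

lemma fzeroH: assumes "a > 0" "a \<noteq> 1" shows "f_zero (fH a) = ereal (-1/(a-1))"
proof -
  have "((\<lambda>t::real. t powr a) \<longlongrightarrow> 0) (at_right 0)" using assms by real_asymp
  then have "((\<lambda>t::real. ((t powr a - 1)/(a-1))) \<longlongrightarrow> (0-1)/(a-1)) (at_right 0)"
    using assms by (intro tendsto_intros) auto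
  then have "((\<lambda>t. ereal (fH a t)) \<longlongrightarrow> ereal (-1/(a-1))) (at_right 0)"
    by (intro tendsto_ereal) simp
  then show ?thesis unfolding f_zero_def by (intro tendsto_Lim) auto
qed

lemma ereal_tendsto_inf: assumes "filterlim h at_top F" shows "((\<lambda>t. ereal (h t)) \<longlongrightarrow> \<infinity>) F"
  unfolding tendsto_PInfty
proof
  fix r :: real
  have "eventually (\<lambda>t. r + 1 \<le> h t) F" using assms filterlim_at_top by blast
  then show "eventually (\<lambda>t. ereal r < ereal (h t)) F" by (rule eventually_mono) simp
qed

lemma fslopeH_gt: assumes "a > 1" shows "f_slope_inf (fH a) = \<infinity>"
proof -
  have "filterlim (\<lambda>t::real. ((t powr a - 1)/(a-1))/t) at_top at_top" using assms by real_asymp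
  then show ?thesis unfolding f_slope_inf_def by (intro tendsto_Lim ereal_tendsto_inf) auto
qed

lemma fslopeH_lt: assumes "a > 0" "a < 1" shows "f_slope_inf (fH a) = 0"
proof -
  have "((\<lambda>t::real. ((t powr a - 1)/(a-1))/t) \<longlongrightarrow> 0) at_top" using assms by real_asymp
  then have "((\<lambda>t. ereal (fH a t / t)) \<longlongrightarrow> ereal 0) at_top" by (intro tendsto_ereal)
  then show ?thesis unfolding f_slope_inf_def zero_ereal_def by (intro tendsto_Lim) auto
qed

abbreviation fK :: "real \<Rightarrow> real \<Rightarrow> real" where "fK b \<equiv> (\<lambda>t. t * log b t)"

lemma fzeroK: assumes "b > 1" shows "f_zero (fK b) = 0"
proof -
  have "((\<lambda>t::real. t * log b t) \<longlongrightarrow> 0) (at_right 0)" using assms by real_asymp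
  then have "((\<lambda>t. ereal (fK b t)) \<longlongrightarrow> ereal 0) (at_right 0)" by (intro tendsto_ereal)
  then show ?thesis unfolding f_zero_def zero_ereal_def by (intro tendsto_Lim) auto
qed

lemma fslopeK: assumes "b > 1" shows "f_slope_inf (fK b) = \<infinity>"
proof -
  have "filterlim (\<lambda>t::real. t * log b t / t) at_top at_top" using assms by real_asymp
  then show ?thesis unfolding f_slope_inf_def by (intro tendsto_Lim ereal_tendsto_inf) auto
qed

lemma powr_swap:
  fixes p q a :: real assumes p: "p > 0" and q: "q > 0"
  shows "q * (p/q) powr a = p * (q/p) powr (1-a)"
proof -
  have "q powr (1-a) = q / q powr a" using q by (simp add: powr_diff)
  moreover have "p powr (1-a) = p / p powr a" using p by (simp add: powr_diff)
  ultimately show ?thesis using p q by (simp add: powr_divide field_simps)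
qed

definition "cH1 e g = (1-e)/g"
definition "cH2 e g = 1 + e/g"
definition "KH a e g = phiH a (cH1 e g) - cH1 e g * dphiH a (cH1 e g) + phiH a (cH2 e g) - cH2 e g * dphiH a (cH2 e g) - phiH a (1/g)"
definition "AH a e g = 1/(a-1) + KH a e g + dphiH a (cH1 e g)/g"
definition "BH a e g = -1/(a-1) + dphiH a (cH2 e g)"
definition "CH a e g = (dphiH a (cH2 e g) - dphiH a (cH1 e g))/g"

lemma phiH0: "a < 1 \<Longrightarrow> phiH a 0 = -1/(a-1)" by (simp add: phiH_def)

lemma hell_pw:
  assumes a: "a > 0" "a \<noteq> 1" and g: "g \<ge> 1" and e: "0 \<le> e" "e < 1"
    and p: "p x \<ge> 0" and q: "q x \<ge> 0"
  shows "ereal (AH a e g * p x + BH a e g * q x + CH a e g * max 0 (p x - g * q x)) \<le> f_integrand (fH a) p q x"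
proof -
  have g0: "g > 0" using g by simp
  have c1: "cH1 e g > 0" using e g0 by (simp add: cH1_def)
  have c2: "cH2 e g > 0" using e g0 by (simp add: cH2_def add_pos_nonneg)
  let ?d1 = "dphiH a (cH1 e g)" and ?d2 = "dphiH a (cH2 e g)"
  have d2: "?d2 \<le> 0" by (simp add: dphiH_def)
  have lin: "AH a e g * p x + BH a e g * q x + CH a e g * max 0 (p x - g * q x)
     = p x * KH a e g + ?d1 * (p x/g - max 0 (p x - g*q x)/g) + ?d2 * (q x + max 0 (p x - g*q x)/g) + (p x - q x)/(a-1)"
  proof -
    have am: "a - 1 \<noteq> 0" using a by simp
    show ?thesis unfolding AH_def BH_def CH_def by (simp add: divide_inverse algebra_simps)
  qed
  have keyH: "p x * KH a e g + ?d1 * (p x/g - max 0 (p x - g*q x)/g) + ?d2 * (q x + max 0 (p x - g*q x)/g)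
      \<le> p x * phiH a (q x / p x)" if "p x > 0" and tan0: "a < 1 \<or> q x > 0"
    unfolding KH_def
  proof (rule key[OF g0 that(1) q])
    have mpos: "max (q x / p x) (1/g) > 0" using g0 by (simp add: less_max_iff_disj)
    show "phiH a (cH2 e g) + ?d2 * (max (q x / p x) (1 / g) - cH2 e g) \<le> phiH a (max (q x / p x) (1 / g))"
      by (rule tangentH[OF a c2 mpos])
    show "phiH a (cH1 e g) + ?d1 * (min (q x / p x) (1 / g) - cH1 e g) \<le> phiH a (min (q x / p x) (1 / g))"
    proof (cases "q x > 0")
      case True
      then have "min (q x / p x) (1/g) > 0" using g0 that by simp
      then show ?thesis by (rule tangentH[OF a c1])
    next
      case False
      then have "q x = 0" "a < 1" using q tan0 by auto
      then show ?thesis using tangentH0[OF a(1) \<open>a<1\<close> c1] g0 by simp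
    qed
  qed
  show ?thesis
  proof (cases "p x > 0")
    case pp: True
    show ?thesis
    proof (cases "q x > 0")
      case True
      have "q x * fH a (p x / q x) = (q x * (p x/q x) powr a - q x)/(a-1)"
        by (simp add: divide_inverse algebra_simps)
      also have "\<dots> = (p x * (q x/p x) powr (1-a) - q x)/(a-1)" using powr_swap[OF pp True, of a] by simp
      also have "\<dots> = p x * phiH a (q x / p x) + (p x - q x)/(a-1)"
        by (simp add: phiH_def divide_inverse algebra_simps)
      finally have "q x * fH a (p x / q x) = p x * phiH a (q x / p x) + (p x - q x)/(a-1)" .
      then show ?thesis using pp True keyH lin unfolding f_integrand_def by simp
    next
      case False
      then have q0: "q x = 0" using q by simp
      show ?thesis
      proof (cases "a > 1")
        case True
        then show ?thesis using pp q0 fslopeH_gt[OF True] unfolding f_integrand_def by simp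
      next
        case False
        then have a1: "a < 1" using a by simp
        have "p x * phiH a (q x / p x) + (p x - q x)/(a-1) = 0" using q0 phiH0[OF a1] by simp
        then show ?thesis using pp q0 fslopeH_lt[OF a(1) a1] keyH[OF pp] a1 lin
          unfolding f_integrand_def by simp
      qed
    qed
  next
    case False
    then have p0: "p x = 0" using p by simp
    show ?thesis
    proof (cases "q x > 0")
      case True
      have "BH a e g * q x \<le> - q x / (a-1)" unfolding BH_def
        using mult_right_mono[OF d2 q] by (simp add: field_simps)
      moreover have "max 0 (- (g * q x)) = 0" using g0 True by simp
      ultimately show ?thesis using p0 True fzeroH[OF a] unfolding f_integrand_def by simp
    next
      case False
      then show ?thesis using p0 q unfolding f_integrand_def by simp
    qed
  qed
qed

definition "phiK b s = - log b s"
definition "dphiK b s = - 1 / (s * ln b)"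

lemma tangentK:
  assumes b: "b > 1" and c: "c > 0" and s: "s > 0"
  shows "phiK b c + dphiK b c * (s - c) \<le> phiK b s"
proof -
  have lb: "ln b > 0" using b by simp
  have "ln (s/c) \<le> s/c - 1" using c s by (intro ln_le_minus_one) simp
  then have "ln s - ln c \<le> (s - c)/c" using c s by (simp add: ln_div diff_divide_distrib)
  then have "(ln s - ln c)/ln b \<le> (s - c)/c/ln b" using lb by (intro divide_right_mono) auto
  then show ?thesis unfolding phiK_def dphiK_def log_def using c lb
    by (simp add: field_simps)
qed

definition "KK b e g = phiK b (cH1 e g) - cH1 e g * dphiK b (cH1 e g) + phiK b (cH2 e g) - cH2 e g * dphiK b (cH2 e g) - phiK b (1/g)"
definition "AK b e g = KK b e g + dphiK b (cH1 e g)/g"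
definition "BK b e g = dphiK b (cH2 e g)"
definition "CK b e g = (dphiK b (cH2 e g) - dphiK b (cH1 e g))/g"

lemma kl_pw:
  assumes b: "b > 1" and g: "g \<ge> 1" and e: "0 \<le> e" "e < 1"
    and p: "p x \<ge> 0" and q: "q x \<ge> 0"
  shows "ereal (AK b e g * p x + BK b e g * q x + CK b e g * max 0 (p x - g * q x)) \<le> f_integrand (fK b) p q x"
proof -
  have g0: "g > 0" using g by simp
  have lb: "ln b > 0" using b by simp
  have c1: "cH1 e g > 0" using e g0 by (simp add: cH1_def)
  have c2: "cH2 e g > 0" using e g0 by (simp add: cH2_def add_pos_nonneg)
  let ?d1 = "dphiK b (cH1 e g)" and ?d2 = "dphiK b (cH2 e g)"
  have d2: "?d2 \<le> 0" using c2 lb by (simp add: dphiK_def)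
  have lin: "AK b e g * p x + BK b e g * q x + CK b e g * max 0 (p x - g * q x)
     = p x * KK b e g + ?d1 * (p x/g - max 0 (p x - g*q x)/g) + ?d2 * (q x + max 0 (p x - g*q x)/g)"
    unfolding AK_def BK_def CK_def by (simp add: divide_inverse algebra_simps)
  show ?thesis
  proof (cases "p x > 0")
    case pp: True
    show ?thesis
    proof (cases "q x > 0")
      case True
      have keyK: "p x * KK b e g + ?d1 * (p x/g - max 0 (p x - g*q x)/g) + ?d2 * (q x + max 0 (p x - g*q x)/g)
        \<le> p x * phiK b (q x / p x)"
        unfolding KK_def
      proof (rule key[OF g0 pp q])
        have mpos: "max (q x / p x) (1/g) > 0" using g0 by (simp add: less_max_iff_disj)
        show "phiK b (cH2 e g) + ?d2 * (max (q x / p x) (1 / g) - cH2 e g) \<le> phiK b (max (q x / p x) (1 / g))"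
          by (rule tangentK[OF b c2 mpos])
        have "min (q x / p x) (1/g) > 0" using g0 True pp by simp
        then show "phiK b (cH1 e g) + ?d1 * (min (q x / p x) (1 / g) - cH1 e g) \<le> phiK b (min (q x / p x) (1 / g))"
          by (rule tangentK[OF b c1])
      qed
      have "q x * fK b (p x / q x) = p x * phiK b (q x / p x)"
        using pp True by (simp add: phiK_def log_divide)
      then show ?thesis using pp True keyK lin unfolding f_integrand_def by simp
    next
      case False
      then have q0: "q x = 0" using q by simp
      then show ?thesis using pp q0 fslopeK[OF b] unfolding f_integrand_def by simp
    qed
  next
    case False
    then have p0: "p x = 0" using p by simp
    show ?thesis
    proof (cases "q x > 0")
      case True
      have "BK b e g * q x \<le> 0" unfolding BK_def
        using mult_right_mono[OF d2 q] by simp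
      moreover have "max 0 (- (g * q x)) = 0" using g0 True by simp
      ultimately show ?thesis using p0 True fzeroK[OF b] unfolding f_integrand_def by simp
    next
      case False
      then show ?thesis using p0 q unfolding f_integrand_def by simp
    qed
  qed
qed

definition "AH1 a g = 1/(a-1) + (phiH a 0 + phiH a (cH2 1 g) - cH2 1 g * dphiH a (cH2 1 g) - phiH a (1/g))"
definition "CH1 a g = dphiH a (cH2 1 g) / g"

lemma hell_pw1:
  assumes a: "a > 0" "a < 1" and g: "g \<ge> 1"
    and p: "p x \<ge> 0" and q: "q x \<ge> 0" and pq: "p x = 0 \<or> q x = 0"
  shows "ereal (AH1 a g * p x + BH a 1 g * q x + CH1 a g * max 0 (p x - g * q x)) \<le> f_integrand (fH a) p q x"
proof -
  have a1: "a \<noteq> 1" using a by simp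
  have g0: "g > 0" using g by simp
  have c2: "cH2 1 g > 0" using g0 by (simp add: cH2_def add_pos_nonneg)
  have d2: "dphiH a (cH2 1 g) \<le> 0" by (simp add: dphiH_def)
  show ?thesis
  proof (cases "p x > 0")
    case pp: True
    then have q0: "q x = 0" using pq by simp
    have t: "phiH a (cH2 1 g) + dphiH a (cH2 1 g) * (1/g - cH2 1 g) \<le> phiH a (1/g)"
      using g0 by (intro tangentH[OF a(1) a1 c2]) simp
    have "AH1 a g + CH1 a g \<le> 0" unfolding AH1_def CH1_def using t phiH0[OF a(2)]
      by (simp add: algebra_simps)
    then have "(AH1 a g + CH1 a g) * p x \<le> 0" using pp by (simp add: mult_nonpos_nonneg)
    then show ?thesis using pp q0 fslopeH_lt[OF a] unfolding f_integrand_def by (simp add: algebra_simps)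
  next
    case False
    then have p0: "p x = 0" using p by simp
    show ?thesis
    proof (cases "q x > 0")
      case True
      have "BH a 1 g * q x \<le> - q x / (a-1)" unfolding BH_def
        using mult_right_mono[OF d2 q] by (simp add: field_simps)
      moreover have "max 0 (- (g * q x)) = 0" using g0 True by simp
      ultimately show ?thesis using p0 True fzeroH[OF a(1) a1] unfolding f_integrand_def by simp
    next
      case False
      then show ?thesis using p0 q unfolding f_integrand_def by simp
    qed
  qed
qed

lemma fdiv_infty:
  fixes g :: "'a \<Rightarrow> ereal"
  assumes neg: "(\<integral>\<^sup>+ x. e2ennreal (- g x) \<partial>M) < \<infinity>"
    and ae: "AE x in M. 0 < p x \<longrightarrow> g x = \<infinity>"
    and pm: "p \<in> borel_measurable M" and pp: "(\<integral>\<^sup>+ x. ennreal (p x) \<partial>M) = 1"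
  shows "enn2ereal (\<integral>\<^sup>+ x. e2ennreal (g x) \<partial>M) - enn2ereal (\<integral>\<^sup>+ x. e2ennreal (- g x) \<partial>M) = \<infinity>"
proof -
  have "(\<integral>\<^sup>+ x. top * ennreal (p x) \<partial>M) = top * (\<integral>\<^sup>+ x. ennreal (p x) \<partial>M)"
    using pm by (intro nn_integral_cmult) auto
  then have "(\<integral>\<^sup>+ x. top * ennreal (p x) \<partial>M) = top" using pp by simp
  moreover have "(\<integral>\<^sup>+ x. top * ennreal (p x) \<partial>M) \<le> (\<integral>\<^sup>+ x. e2ennreal (g x) \<partial>M)"
  proof (rule nn_integral_mono_AE)
    show "AE x in M. top * ennreal (p x) \<le> e2ennreal (g x)"
      using ae
    proof (rule eventually_mono)
      fix x assume h: "0 < p x \<longrightarrow> g x = \<infinity>"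
      show "top * ennreal (p x) \<le> e2ennreal (g x)"
      proof (cases "p x > 0")
        case True then show ?thesis using h by simp
      next
        case False then have "ennreal (p x) = 0" by (simp add: ennreal_eq_0_iff)
        then show ?thesis by simp
      qed
    qed
  qed
  ultimately have "(\<integral>\<^sup>+ x. e2ennreal (g x) \<partial>M) = top" by (simp add: top_unique)
  moreover have "enn2ereal (\<integral>\<^sup>+ x. e2ennreal (- g x) \<partial>M) \<noteq> \<infinity>" using neg by simp
  ultimately show ?thesis by simp
qed

lemma dens_facts:
  assumes pm: "p \<in> borel_measurable M" and nn: "\<And>x. x \<in> space M \<Longrightarrow> p x \<ge> 0"
    and pp: "(\<integral>\<^sup>+ x. ennreal (p x) \<partial>M) = 1"
  shows "integrable M p" "integral\<^sup>L M p = 1"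
proof -
  show ip: "integrable M p"
    by (rule integrableI_nn_integral_finite[where x=1]) (use pm nn pp in auto)
  have "(\<integral>\<^sup>+ x. ennreal (p x) \<partial>M) = ennreal (integral\<^sup>L M p)"
    by (rule nn_integral_eq_integral[OF ip]) (use nn in auto)
  then have "ennreal (integral\<^sup>L M p) = 1" using pp by simp
  moreover have "integral\<^sup>L M p \<ge> 0" using nn by (intro integral_nonneg_AE AE_I2) auto
  ultimately show "integral\<^sup>L M p = 1" by (simp add: ennreal_eq_1)
qed

context
  fixes M :: "'a measure" and p q :: "'a \<Rightarrow> real" and g :: real
  assumes p_meas: "p \<in> borel_measurable M" and q_meas: "q \<in> borel_measurable M"
    and p_nn: "\<And>x. x \<in> space M \<Longrightarrow> p x \<ge> 0" and q_nn: "\<And>x. x \<in> space M \<Longrightarrow> q x \<ge> 0"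
    and p_prob: "(\<integral>\<^sup>+ x. ennreal (p x) \<partial>M) = 1" and q_prob: "(\<integral>\<^sup>+ x. ennreal (q x) \<partial>M) = 1"
    and g1: "g \<ge> 1"
begin

lemma ip: "integrable M p" and Ip: "integral\<^sup>L M p = 1"
  using dens_facts[OF p_meas p_nn p_prob] by auto
lemma iq: "integrable M q" and Iq: "integral\<^sup>L M q = 1"
  using dens_facts[OF q_meas q_nn q_prob] by auto

lemma im: "integrable M (\<lambda>x. max 0 (p x - g * q x))"
  using ip iq by (intro integrable_max integrable_diff integrable_mult_right) auto

lemma lin_int:
  shows "integrable M (\<lambda>x. A * p x + B * q x + C * max 0 (p x - g * q x))"
    and "integral\<^sup>L M (\<lambda>x. A * p x + B * q x + C * max 0 (p x - g * q x)) = A + B + C * E_gamma M p q g"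
proof -
  show "integrable M (\<lambda>x. A * p x + B * q x + C * max 0 (p x - g * q x))"
    using ip iq im by simp
  have "integral\<^sup>L M (\<lambda>x. A * p x + B * q x + C * max 0 (p x - g * q x))
     = A * integral\<^sup>L M p + B * integral\<^sup>L M q + C * integral\<^sup>L M (\<lambda>x. max 0 (p x - g * q x))"
    using ip iq im by (simp add: integral_add integrable_add)
  then show "integral\<^sup>L M (\<lambda>x. A * p x + B * q x + C * max 0 (p x - g * q x)) = A + B + C * E_gamma M p q g"
    using Ip Iq by (simp add: E_gamma_def)
qed

lemma E_ge0: "E_gamma M p q g \<ge> 0"
  unfolding E_gamma_def by (intro integral_nonneg_AE AE_I2) auto

lemma E_le1: "E_gamma M p q g \<le> 1"
proof -
  have "E_gamma M p q g \<le> integral\<^sup>L M p"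
    unfolding E_gamma_def
  proof (rule integral_mono[OF im ip])
    fix x assume "x \<in> space M"
    then show "max 0 (p x - g * q x) \<le> p x" using p_nn q_nn g1 by (simp add: mult_nonneg_nonneg)
  qed
  then show ?thesis using Ip by simp
qed

lemma E_one: assumes "E_gamma M p q g = 1" shows "AE x in M. p x = 0 \<or> q x = 0"
proof -
  have int: "integrable M (\<lambda>x. p x - max 0 (p x - g * q x))" using ip im by auto
  have "integral\<^sup>L M (\<lambda>x. p x - max 0 (p x - g * q x)) = 0"
    using ip im Ip assms by (simp add: E_gamma_def)
  moreover have nn: "AE x in M. 0 \<le> p x - max 0 (p x - g * q x)"
    using p_nn q_nn g1 by (intro AE_I2) (simp add: mult_nonneg_nonneg)
  ultimately have "AE x in M. p x - max 0 (p x - g * q x) = 0"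
    using integral_nonneg_eq_0_iff_AE[OF int nn] by simp
  then show ?thesis
  proof (rule eventually_mono)
    fix x assume "p x - max 0 (p x - g * q x) = 0"
    then show "p x = 0 \<or> q x = 0" using g1 by (auto simp: max_def split: if_splits)
  qed
qed

end

lemma inv_powr: assumes "(g::real) > 0" shows "(1/g) powr (1-a) = g powr (a-1)"
proof -
  have "(1/g) powr (1-a) = inverse (g powr (1-a))" by (metis inverse_powr inverse_eq_divide)
  also have "\<dots> = g powr (-(1-a))" by (rule powr_minus[symmetric])
  finally show ?thesis by simp
qed

lemma hb_alg:
  assumes a: "a \<noteq> 1" and g: "g > 0"
  shows "AH a E g + BH a E g + CH a E g * E = 1/(a-1)*((1+E/g) powr (1-a) + ((1-E)/g) powr (1-a) - 1 - g powr (a-1))"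
proof -
  have "AH a E g + BH a E g + CH a E g * E = phiH a (cH1 E g) + phiH a (cH2 E g) - phiH a (1/g)
      + dphiH a (cH1 E g) * ((1-E)/g - cH1 E g) + dphiH a (cH2 E g) * (1 + E/g - cH2 E g)"
    unfolding AH_def BH_def CH_def KH_def by (simp add: divide_inverse algebra_simps)
  also have "\<dots> = phiH a ((1-E)/g) + phiH a (1+E/g) - phiH a (1/g)" by (simp add: cH1_def cH2_def)
  also have "\<dots> = 1/(a-1)*((1+E/g) powr (1-a) + ((1-E)/g) powr (1-a) - 1 - g powr (a-1))"
    unfolding phiH_def inv_powr[OF g] by (simp add: divide_inverse algebra_simps)
  finally show ?thesis .
qed

lemma hb1_alg:
  assumes a: "a < 1" and g: "g > 0"
  shows "AH1 a g + BH a 1 g + CH1 a g * 1 = 1/(a-1)*((1+1/g) powr (1-a) + ((1-1)/g) powr (1-a) - 1 - g powr (a-1))"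
proof -
  have "AH1 a g + BH a 1 g + CH1 a g * 1 = phiH a 0 + phiH a (cH2 1 g) - phiH a (1/g)
      + dphiH a (cH2 1 g) * (1 + 1/g - cH2 1 g)"
    unfolding AH1_def BH_def CH1_def by (simp add: divide_inverse algebra_simps)
  also have "\<dots> = phiH a 0 + phiH a (1+1/g) - phiH a (1/g)" by (simp add: cH2_def)
  also have "\<dots> = 1/(a-1)*((1+1/g) powr (1-a) + ((1-1)/g) powr (1-a) - 1 - g powr (a-1))"
    unfolding phiH_def inv_powr[OF g] by (simp add: divide_inverse algebra_simps)
  finally show ?thesis .
qed

lemma kb_alg:
  assumes b: "b > 1" and g: "g > 0" and e: "0 \<le> E" "E < 1"
  shows "AK b E g + BK b E g + CK b E g * E = - log b ((1+E/g)*(1-E))"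
proof -
  have "AK b E g + BK b E g + CK b E g * E = phiK b (cH1 E g) + phiK b (cH2 E g) - phiK b (1/g)
      + dphiK b (cH1 E g) * ((1-E)/g - cH1 E g) + dphiK b (cH2 E g) * (1 + E/g - cH2 E g)"
    unfolding AK_def BK_def CK_def KK_def by (simp add: divide_inverse algebra_simps)
  also have "\<dots> = phiK b ((1-E)/g) + phiK b (1+E/g) - phiK b (1/g)" by (simp add: cH1_def cH2_def)
  also have "\<dots> = - log b ((1+E/g)*(1-E))"
  proof -
    have p1: "1 + E/g > 0" using e g by (simp add: add_pos_nonneg)
    have p2: "1 - E > 0" using e by simp
    show ?thesis unfolding phiK_def using p1 p2 g b
      by (simp add: log_mult log_divide)
  qed
  finally show ?thesis .
qed

context
  fixes M :: "'a measure" and p q :: "'a \<Rightarrow> real" and g :: real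
  assumes p_meas: "p \<in> borel_measurable M" and q_meas: "q \<in> borel_measurable M"
    and p_nn: "\<And>x. x \<in> space M \<Longrightarrow> p x \<ge> 0" and q_nn: "\<And>x. x \<in> space M \<Longrightarrow> q x \<ge> 0"
    and p_prob: "(\<integral>\<^sup>+ x. ennreal (p x) \<partial>M) = 1" and q_prob: "(\<integral>\<^sup>+ x. ennreal (q x) \<partial>M) = 1"
    and g1: "g \<ge> 1"
begin

lemmas facts = p_meas q_meas p_nn q_nn p_prob q_prob g1

lemma hell_lower:
  assumes a: "a > 0" "a \<noteq> 1"
  shows "hellinger a M p q \<ge>
         (let E = E_gamma M p q g in
          if E = 1 \<and> a > 1 then \<infinity>
          else ereal (1 / (a - 1) * ((1 + E / g) powr (1 - a) + ((1 - E) / g) powr (1 - a)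
                                     - 1 - g powr (a - 1))))"
proof -
  define E where "E = E_gamma M p q g"
  have g0: "g > 0" using g1 by simp
  have E0: "0 \<le> E" and E1: "E \<le> 1" unfolding E_def using E_ge0[OF facts] E_le1[OF facts] by auto
  have H: "hellinger a M p q = enn2ereal (\<integral>\<^sup>+ x. e2ennreal (f_integrand (fH a) p q x) \<partial>M)
       - enn2ereal (\<integral>\<^sup>+ x. e2ennreal (- f_integrand (fH a) p q x) \<partial>M)"
    unfolding hellinger_def f_div_def ..
  show ?thesis
  proof (cases "E < 1")
    case True
    have "ereal (integral\<^sup>L M (\<lambda>x. AH a E g * p x + BH a E g * q x + CH a E g * max 0 (p x - g * q x)))
          \<le> hellinger a M p q"
      unfolding H
      by (rule fdiv_lower(1)[OF _ lin_int(1)[OF facts]], intro AE_I2 hell_pw[OF a g1 E0 True] p_nn q_nn)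
    moreover have "integral\<^sup>L M (\<lambda>x. AH a E g * p x + BH a E g * q x + CH a E g * max 0 (p x - g * q x))
       = AH a E g + BH a E g + CH a E g * E" using lin_int(2)[OF facts] by (simp add: E_def)
    ultimately show ?thesis using True hb_alg[OF a(2) g0, of E] by (simp add: Let_def E_def[symmetric])
  next
    case False
    then have E1': "E = 1" using E1 by simp
    have ae: "AE x in M. p x = 0 \<or> q x = 0" using E_one[OF facts] E1' unfolding E_def by blast
    show ?thesis
    proof (cases "a > 1")
      case True
      have neg: "(\<integral>\<^sup>+ x. e2ennreal (- f_integrand (fH a) p q x) \<partial>M) < \<infinity>"
        by (rule fdiv_lower(2)[OF _ lin_int(1)[OF facts, of "AH a 0 g" "BH a 0 g" "CH a 0 g"]], intro AE_I2 hell_pw[OF a g1 order_refl zero_less_one] p_nn q_nn)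
      have "hellinger a M p q = \<infinity>" unfolding H
      proof (rule fdiv_infty[OF neg _ p_meas p_prob])
        show "AE x in M. 0 < p x \<longrightarrow> f_integrand (fH a) p q x = \<infinity>"
          using ae by (rule eventually_mono) (use fslopeH_gt[OF True] in \<open>auto simp: f_integrand_def\<close>)
      qed
      then show ?thesis by simp
    next
      case False
      then have a1: "a < 1" using a by simp
      have "ereal (integral\<^sup>L M (\<lambda>x. AH1 a g * p x + BH a 1 g * q x + CH1 a g * max 0 (p x - g * q x)))
          \<le> hellinger a M p q"
        unfolding H
      proof (rule fdiv_lower(1))
        show "integrable M (\<lambda>x. AH1 a g * p x + BH a 1 g * q x + CH1 a g * max 0 (p x - g * q x))"
          using lin_int[OF facts] by blast
        have "AE x in M. x \<in> space M" by simp
        with ae show "AE x in M. ereal (AH1 a g * p x + BH a 1 g * q x + CH1 a g * max 0 (p x - g * q x))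
             \<le> f_integrand (fH a) p q x"
          by eventually_elim (rule hell_pw1[OF a(1) a1 g1], auto intro: p_nn q_nn)
      qed
      moreover have "integral\<^sup>L M (\<lambda>x. AH1 a g * p x + BH a 1 g * q x + CH1 a g * max 0 (p x - g * q x))
       = AH1 a g + BH a 1 g + CH1 a g * 1" using lin_int(2)[OF facts] E1' by (simp add: E_def)
      ultimately show ?thesis using a1 hb1_alg[OF a1 g0] E1' by (simp add: Let_def E_def[symmetric])
    qed
  qed
qed

lemma kl_lower:
  assumes b: "b > 1"
  shows "relent b M p q \<ge>
         (let E = E_gamma M p q g in
          if E = 1 then \<infinity> else ereal (- log b ((1 + E / g) * (1 - E))))"
proof -
  define E where "E = E_gamma M p q g"
  have g0: "g > 0" using g1 by simp
  have E0: "0 \<le> E" and E1: "E \<le> 1" unfolding E_def using E_ge0[OF facts] E_le1[OF facts] by auto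
  have H: "relent b M p q = enn2ereal (\<integral>\<^sup>+ x. e2ennreal (f_integrand (fK b) p q x) \<partial>M)
       - enn2ereal (\<integral>\<^sup>+ x. e2ennreal (- f_integrand (fK b) p q x) \<partial>M)"
    unfolding relent_def f_div_def ..
  show ?thesis
  proof (cases "E < 1")
    case True
    have "ereal (integral\<^sup>L M (\<lambda>x. AK b E g * p x + BK b E g * q x + CK b E g * max 0 (p x - g * q x)))
          \<le> relent b M p q"
      unfolding H
      by (rule fdiv_lower(1)[OF _ lin_int(1)[OF facts]], intro AE_I2 kl_pw[OF b g1 E0 True] p_nn q_nn)
    moreover have "integral\<^sup>L M (\<lambda>x. AK b E g * p x + BK b E g * q x + CK b E g * max 0 (p x - g * q x))
       = AK b E g + BK b E g + CK b E g * E" using lin_int(2)[OF facts] by (simp add: E_def)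
    ultimately show ?thesis using True kb_alg[OF b g0 E0 True] by (simp add: Let_def E_def[symmetric])
  next
    case False
    then have E1': "E = 1" using E1 by simp
    have ae: "AE x in M. p x = 0 \<or> q x = 0" using E_one[OF facts] E1' unfolding E_def by blast
    have neg: "(\<integral>\<^sup>+ x. e2ennreal (- f_integrand (fK b) p q x) \<partial>M) < \<infinity>"
      by (rule fdiv_lower(2)[OF _ lin_int(1)[OF facts, of "AK b 0 g" "BK b 0 g" "CK b 0 g"]], intro AE_I2 kl_pw[OF b g1 order_refl zero_less_one] p_nn q_nn)
    have "relent b M p q = \<infinity>" unfolding H
    proof (rule fdiv_infty[OF neg _ p_meas p_prob])
      show "AE x in M. 0 < p x \<longrightarrow> f_integrand (fK b) p q x = \<infinity>"
        using ae by (rule eventually_mono) (use fslopeK[OF b] in \<open>auto simp: f_integrand_def\<close>)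
    qed
    then show ?thesis by simp
  qed
qed

end

lemma arg_eq:
  fixes a g E :: real
  assumes a: "a \<noteq> 1" and g: "g > 0"
  shows "1 + (a - 1) * (1 / (a - 1) * ((1 + E / g) powr (1 - a) + ((1 - E) / g) powr (1 - a) - 1 - g powr (a - 1)))
    = (1 + E / g) powr (1 - a) + g powr (a - 1) * ((1 - E) powr (1 - a) - 1)"
proof -
  have "((1 - E) / g) powr (1 - a) = (1-E) powr (1-a) * inverse (g powr (1-a))"
    by (simp add: divide_inverse powr_mult inverse_powr)
  also have "\<dots> = (1-E) powr (1-a) * g powr (a-1)" using powr_minus[of g "1-a"] by simp
  finally have h: "((1 - E) / g) powr (1 - a) = (1-E) powr (1-a) * g powr (a-1)" .
  have am: "a - 1 \<noteq> 0" using a by simp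
  have c: "(a - 1) * (1 / (a - 1) * Y) = Y" for Y using am by simp
  show ?thesis unfolding c h by (simp add: algebra_simps)
qed

lemma renyi_step:
  fixes H :: ereal and a b g E :: real
  assumes b: "b > 1" and a: "a > 0" "a \<noteq> 1" and g: "g \<ge> 1" and E0: "0 \<le> E" and E1: "E \<le> 1"
    and HH: "H \<ge> (if E = 1 \<and> a > 1 then \<infinity>
          else ereal (1 / (a - 1) * ((1 + E / g) powr (1 - a) + ((1 - E) / g) powr (1 - a)
                                     - 1 - g powr (a - 1))))"
  shows "(if H = \<infinity> then \<infinity>
            else (let y = 1 + (a - 1) * real_of_ereal H in
                  if y \<le> 0 then \<infinity> else ereal (log b y / (a - 1))))
     \<ge> (if E = 1 \<and> a > 1 then \<infinity>
          else ereal (1 / (a - 1) * log b ((1 + E / g) powr (1 - a)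
                                     + g powr (a - 1) * ((1 - E) powr (1 - a) - 1))))"
proof (cases "H = \<infinity>")
  case True then show ?thesis by simp
next
  case Hfin: False
  define \<beta> where "\<beta> = 1 / (a - 1) * ((1 + E / g) powr (1 - a) + ((1 - E) / g) powr (1 - a) - 1 - g powr (a - 1))"
  define arg where "arg = (1 + E / g) powr (1 - a) + g powr (a - 1) * ((1 - E) powr (1 - a) - 1)"
  have g0: "g > 0" using g by simp
  have argeq: "1 + (a - 1) * \<beta> = arg" unfolding \<beta>_def arg_def by (rule arg_eq[OF a(2) g0])
  have nc: "\<not> (E = 1 \<and> a > 1)" using HH Hfin by (auto split: if_splits)
  from HH have "H \<ge> (if E = 1 \<and> a > 1 then \<infinity> else ereal \<beta>)" unfolding \<beta>_def .
  then have Hb: "H \<ge> ereal \<beta>" using nc by simp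
  then obtain h where Hh: "H = ereal h" using Hfin by (cases H) auto
  have hb: "h \<ge> \<beta>" using Hb Hh by simp
  define y where "y = 1 + (a - 1) * h"
  have lb: "ln b > 0" using b by simp
  show ?thesis
  proof (cases "a > 1")
    case True
    then have E1': "E < 1" using nc E1 by auto
    have "y \<ge> arg" unfolding y_def argeq[symmetric] using True hb by (simp add: mult_left_mono)
    have "E / g \<ge> 0" using E0 g0 by simp
    then have "1 + E / g > 0" by linarith
    then have t1: "(1 + E / g) powr (1 - a) > 0" by simp
    have "(1 - E) powr (a - 1) \<le> 1" using E0 E1' True by (intro powr_le1) auto
    moreover have "(1 - E) powr (a - 1) > 0" using E1' by simp
    moreover have "(1 - E) powr (1 - a) = inverse ((1 - E) powr (a - 1))"
      using powr_minus[of "1-E" "a-1"] by simp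
    ultimately have "(1 - E) powr (1 - a) \<ge> 1" by (simp add: one_le_inverse)
    then have "g powr (a - 1) * ((1 - E) powr (1 - a) - 1) \<ge> 0" by simp
    then have argpos: "arg > 0" unfolding arg_def using t1 by linarith
    then have ypos: "y > 0" using \<open>y \<ge> arg\<close> by simp
    have "log b arg \<le> log b y" using argpos \<open>y \<ge> arg\<close> b by simp
    then have "log b arg / (a - 1) \<le> log b y / (a - 1)" using True by (simp add: divide_right_mono)
    then show ?thesis using Hfin nc ypos unfolding Hh by (simp add: Let_def y_def[symmetric] arg_def[symmetric])
  next
    case False
    then have a1: "a < 1" using a by simp
    have "y \<le> arg" unfolding y_def argeq[symmetric] using a1 hb
      by (simp add: mult_left_mono_neg)
    show ?thesis
    proof (cases "y \<le> 0")
      case True then show ?thesis using Hfin unfolding Hh by (simp add: Let_def y_def[symmetric])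
    next
      case False
      then have ypos: "y > 0" by simp
      have "log b y \<le> log b arg" using ypos \<open>y \<le> arg\<close> b by simp
      then have "log b arg / (a - 1) \<le> log b y / (a - 1)" using a1 by (simp add: divide_right_mono_neg)
      then show ?thesis using Hfin a1 ypos unfolding Hh by (simp add: Let_def y_def[symmetric] arg_def[symmetric])
    qed
  qed
qed

theorem corollary2:
  fixes M :: "'a measure" and p q :: "'a \<Rightarrow> real" and b \<alpha> \<gamma> :: real
  assumes b: "b > 1"
    and alpha: "\<alpha> > 0" and gamma: "\<gamma> \<ge> 1"
    and p_meas: "p \<in> borel_measurable M" and q_meas: "q \<in> borel_measurable M"
    and p_nn: "\<And>x. x \<in> space M \<Longrightarrow> p x \<ge> 0" and q_nn: "\<And>x. x \<in> space M \<Longrightarrow> q x \<ge> 0"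
    and p_prob: "(\<integral>\<^sup>+ x. ennreal (p x) \<partial>M) = 1" and q_prob: "(\<integral>\<^sup>+ x. ennreal (q x) \<partial>M) = 1"
  shows
    "(\<alpha> \<noteq> 1 \<longrightarrow>
       hellinger \<alpha> M p q \<ge>
         (let E = E_gamma M p q \<gamma> in
          if E = 1 \<and> \<alpha> > 1 then \<infinity>
          else ereal (1 / (\<alpha> - 1) * ((1 + E / \<gamma>) powr (1 - \<alpha>) + ((1 - E) / \<gamma>) powr (1 - \<alpha>)
                                     - 1 - \<gamma> powr (\<alpha> - 1)))))
     \<and> (relent (exp 1) M p q \<ge>
         (let E = E_gamma M p q \<gamma> in
          if E = 1 then \<infinity> else ereal (- ln ((1 + E / \<gamma>) * (1 - E)))))
     \<and> (\<alpha> \<noteq> 1 \<longrightarrow>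
       renyi b \<alpha> M p q \<ge>
         (let E = E_gamma M p q \<gamma> in
          if E = 1 \<and> \<alpha> > 1 then \<infinity>
          else ereal (1 / (\<alpha> - 1) * log b ((1 + E / \<gamma>) powr (1 - \<alpha>)
                                     + \<gamma> powr (\<alpha> - 1) * ((1 - E) powr (1 - \<alpha>) - 1)))))
     \<and> (\<alpha> = 1 \<longrightarrow>
       renyi b \<alpha> M p q = relent b M p q \<and>
       relent b M p q \<ge>
         (let E = E_gamma M p q \<gamma> in
          if E = 1 then \<infinity> else ereal (- log b ((1 + E / \<gamma>) * (1 - E)))))"
  apply (intro conjI impI)
  subgoal by (rule hell_lower[OF p_meas q_meas p_nn q_nn p_prob q_prob gamma alpha])
  subgoal
  proof -
    have "exp 1 > (1::real)" by simp
    have e: "\<And>x. log (exp 1) x = ln x" using log_ln by metis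
    from kl_lower[OF p_meas q_meas p_nn q_nn p_prob q_prob gamma \<open>exp 1 > 1\<close>] show ?thesis
      by (simp only: e)
  qed
  subgoal
  proof -
    assume a1: "\<alpha> \<noteq> 1"
    have E0: "0 \<le> E_gamma M p q \<gamma>" by (rule E_ge0[OF p_meas q_meas p_nn q_nn p_prob q_prob gamma])
    have E1: "E_gamma M p q \<gamma> \<le> 1" by (rule E_le1[OF p_meas q_meas p_nn q_nn p_prob q_prob gamma])
    note HH = hell_lower[OF p_meas q_meas p_nn q_nn p_prob q_prob gamma alpha a1]
    show ?thesis using renyi_step[OF b alpha a1 gamma E0 E1 HH[unfolded Let_def]] a1
      unfolding renyi_def by (simp add: Let_def)
  qed
  subgoal by (simp add: renyi_def)
  subgoal by (rule kl_lower[OF p_meas q_meas p_nn q_nn p_prob q_prob gamma b])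
  done

end
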